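(* Let $f:\mathbb{R}^d\times\mathcal{X}\to\mathbb{R}$ be differentiable in $\theta$, with $\mathcal{X}$ a subset of a Euclidean space and $\sup_{x\in\mathcal{X}}\Vert x\Vert\le D<\infty$. Assume (A1): there are $K_1,K_2>0$ with $\Vert\nabla f(\theta,x)-\nabla f(\hat\theta,\hat x)\Vert\le K_1\Vert\theta-\hat\theta\Vert+K_2\Vert x-\hat x\Vert(\Vert\theta\Vert+\Vert\hat\theta\Vert+1)$ for all $\theta,\hat\theta\in\mathbb{R}^d$, $x,\hat x\in\mathcal{X}$; (A3): there are $m>0$, $K>0$ with $\langle\nabla f(\theta_1,x)-\nabla f(\theta_2,x),\theta_1-\theta_2\rangle\ge m\Vert\theta_1-\theta_2\Vert^2-K$ for all $\theta_1,\theta_2,x$; (N): $(\xi_k)_{k\ge1}$ are i.i.d. random vectors in $\mathbb{R}^d$, independent of the minibatches, with a continuous everywhere-positive density, $\mathbb{E}\xi_1=0$ and $\sigma^2:=\mathbb{E}\Vert\xi_1\Vert^2<\infty$. Let $\hat x_1,\dots,\hat x_n\in\mathcal{X}$, $b\in\{1,\dots,n\}$, $(\Omega_k)$ i.i.d. uniformly random $b$-subsets of $\{1,\dots,n\}$, and let $\hat P$ be the transition kernel of $\hat\theta_k=\hat\theta_{k-1}-\frac\eta b\sum_{i\in\Omega_k}\nabla f(\hat\theta_{k-1},\hat x_i)+\eta\xi_k$. Let $\hat\theta_*$ be a minimizer of $\frac1n\sum_{i=1}^nf(\theta,\hat x_i)$ and $\hat V(\theta):=1+\Vert\theta-\hat\theta_*\Vert^2$.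 If $\eta<\min\left\{\frac1m,\frac{m}{K_1^2+64D^2K_2^2}\right\}$, then for all $\theta\in\mathbb{R}^d$, $$(\hat P\hat V)(\theta)\le(1-m\eta)\hat V(\theta)+2m\eta-\eta^2K_1^2-56\eta^2D^2K_2^2+64\eta^2D^2K_2^2\Vert\hat\theta_*\Vert^2+2\eta K+\eta^2\sigma^2.$$
   Context: $(\hat P\hat V)(\theta)=\mathbb{E}[\hat V(\hat\theta_1)\mid\hat\theta_0=\theta]$. *)

theory Defs
  imports "HOL-Probability.Probability"
begin

definition grad :: "(real^'d \<Rightarrow> 'x \<Rightarrow> real) \<Rightarrow> real^'d \<Rightarrow> 'x \<Rightarrow> real^'d" where
  "grad f t x = (SOME g. ((\<lambda>s. f s x) has_derivative (\<lambda>h. g \<bullet> h)) (at t))"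

definition bsubsets :: "nat \<Rightarrow> nat \<Rightarrow> nat set set" where
  "bsubsets n b = {S. S \<subseteq> {1..n} \<and> card S = b}"

definition sgld_step ::
  "(real^'d \<Rightarrow> 'x \<Rightarrow> real) \<Rightarrow> (nat \<Rightarrow> 'x) \<Rightarrow> real \<Rightarrow> nat \<Rightarrow> real^'d \<Rightarrow> nat set \<Rightarrow> real^'d \<Rightarrow> real^'d" where
  "sgld_step f xs \<eta> b t Om z =
     t - (\<eta> / real b) *\<^sub>R (\<Sum>i\<in>Om. grad f t (xs i)) + \<eta> *\<^sub>R z"

definition kernel_apply ::
  "(real^'d \<Rightarrow> 'x \<Rightarrow> real) \<Rightarrow> (nat \<Rightarrow> 'x) \<Rightarrow> nat \<Rightarrow> nat \<Rightarrow> real \<Rightarrow> (real^'d) measure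
     \<Rightarrow> (real^'d \<Rightarrow> real) \<Rightarrow> real^'d \<Rightarrow> real" where
  "kernel_apply f xs n b \<eta> M V t =
     (\<integral>w. V (sgld_step f xs \<eta> b t (fst w) (snd w))
        \<partial>(measure_pmf (pmf_of_set (bsubsets n b)) \<Otimes>\<^sub>M M))"

end

theory Submission
  imports Defs
begin


lemma kernel_eq:
  fixes A :: "nat set \<Rightarrow> real^'d" and M :: "(real^'d) measure" and S :: "nat set set"
  assumes prob: "prob_space M" and sM[measurable_cong]: "sets M = sets borel"
    and int1: "integrable M (\<lambda>z. z)" and int0: "(\<integral>z. z \<partial>M) = 0"
    and int2: "integrable M (\<lambda>z. (norm z)\<^sup>2)"
    and S: "finite S" "S \<noteq> {}"
  shows "(\<integral>w. 1 + (norm (A (fst w) + \<eta> *\<^sub>R snd w))\<^sup>2 \<partial>(measure_pmf (pmf_of_set S) \<Otimes>\<^sub>M M))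
     = (\<Sum>Om\<in>S. 1 + (norm (A Om))\<^sup>2 + \<eta>\<^sup>2 * (\<integral>z. (norm z)\<^sup>2 \<partial>M)) / card S"
proof -
  let ?M1 = "measure_pmf (pmf_of_set S)"
  interpret M2: prob_space M by (rule prob)
  interpret P: pair_sigma_finite ?M1 M
    by (intro pair_sigma_finite.intro prob_space_imp_sigma_finite prob measure_pmf.prob_space_axioms)
  have eq: "1 + (norm (a + \<eta> *\<^sub>R z))\<^sup>2 = 1 + (norm a)\<^sup>2 + (2*\<eta>) * (a \<bullet> z) + \<eta>\<^sup>2 * (norm z)\<^sup>2" for a z :: "real^'d"
    unfolding power2_norm_eq_inner by (simp add: inner_add_left inner_add_right inner_commute power2_eq_square algebra_simps)
  have Ameas: "A \<in> borel_measurable ?M1"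
    using measurable_cong_sets[OF sets_measure_pmf_count_space[of "pmf_of_set S"] refl, of borel] by simp
  have meas: "(\<lambda>w. 1 + (norm (A (fst w) + \<eta> *\<^sub>R snd w))\<^sup>2) \<in> borel_measurable (?M1 \<Otimes>\<^sub>M M)"
    using Ameas by measurable
  have inner_int: "integrable M (\<lambda>z. 1 + (norm (a + \<eta> *\<^sub>R z))\<^sup>2)" for a
      proof -
    have i1: "integrable M (\<lambda>z. 2 * \<eta> * (a \<bullet> z))" using int1 by (intro integrable_mult_right integrable_inner_right)
    have i2: "integrable M (\<lambda>z. \<eta>\<^sup>2 * (norm z)\<^sup>2)" using int2 by (intro integrable_mult_right)
    show ?thesis unfolding eq by (intro Bochner_Integration.integrable_add M2.integrable_const i1 i2)
  qed
  have inner_val: "(\<integral>z. 1 + (norm (a + \<eta> *\<^sub>R z))\<^sup>2 \<partial>M) = 1 + (norm a)\<^sup>2 + \<eta>\<^sup>2 * (\<integral>z. (norm z)\<^sup>2 \<partial>M)" for a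
  proof -
    have "(\<integral>z. 1 + (norm (a + \<eta> *\<^sub>R z))\<^sup>2 \<partial>M) = (\<integral>z. (1 + (norm a)\<^sup>2) + ((2*\<eta>) * (a \<bullet> z) + \<eta>\<^sup>2 * (norm z)\<^sup>2) \<partial>M)"
      unfolding eq by (simp add: add.assoc)
    also have "\<dots> = (1 + (norm a)\<^sup>2) + ((2*\<eta>) * (\<integral>z. a \<bullet> z \<partial>M) + \<eta>\<^sup>2 * (\<integral>z. (norm z)\<^sup>2 \<partial>M))"
      using int1 int2 by (subst Bochner_Integration.integral_add) (auto intro!: Bochner_Integration.integrable_add integrable_mult_right integrable_inner_right simp: M2.prob_space)
    also have "(\<integral>z. a \<bullet> z \<partial>M) = 0" using int1 int0 by simp
    finally show ?thesis by simp
  qed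
  have integ: "integrable (?M1 \<Otimes>\<^sub>M M) (\<lambda>w. 1 + (norm (A (fst w) + \<eta> *\<^sub>R snd w))\<^sup>2)"
    by (rule P.Fubini_integrable[OF meas]) (auto intro: integrable_measure_pmf_finite simp: S inner_int)
  have "(\<integral>w. 1 + (norm (A (fst w) + \<eta> *\<^sub>R snd w))\<^sup>2 \<partial>(?M1 \<Otimes>\<^sub>M M))
     = (\<integral>Om. (\<integral>z. 1 + (norm (A Om + \<eta> *\<^sub>R z))\<^sup>2 \<partial>M) \<partial>?M1)"
    using P.integral_fst'[OF integ] by simp
  also have "\<dots> = (\<integral>Om. 1 + (norm (A Om))\<^sup>2 + \<eta>\<^sup>2 * (\<integral>z. (norm z)\<^sup>2 \<partial>M) \<partial>?M1)"
    by (simp add: inner_val)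
  also have "\<dots> = (\<Sum>Om\<in>S. 1 + (norm (A Om))\<^sup>2 + \<eta>\<^sup>2 * (\<integral>z. (norm z)\<^sup>2 \<partial>M)) / card S"
    using S by (simp add: integral_pmf_of_set)
  finally show ?thesis .
qed



lemma card_containing:
  assumes "1 \<le> b" "b \<le> n" "i \<in> {1..n}"
  shows "card {Om \<in> bsubsets n b. i \<in> Om} = (n - 1) choose (b - 1)"
proof -
  have bij: "bij_betw (insert i) {T. T \<subseteq> {1..n} - {i} \<and> card T = b - 1} {Om \<in> bsubsets n b. i \<in> Om}"
  proof (rule bij_betw_byWitness[where f' = "\<lambda>Om. Om - {i}"])
    show "\<forall>T\<in>{T. T \<subseteq> {1..n} - {i} \<and> card T = b - 1}. insert i T - {i} = T" by auto
    show "\<forall>Om\<in>{Om \<in> bsubsets n b. i \<in> Om}. insert i (Om - {i}) = Om" by auto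
    show "insert i ` {T. T \<subseteq> {1..n} - {i} \<and> card T = b - 1} \<subseteq> {Om \<in> bsubsets n b. i \<in> Om}"
    proof
      fix Om assume "Om \<in> insert i ` {T. T \<subseteq> {1..n} - {i} \<and> card T = b - 1}"
      then obtain T where T: "T \<subseteq> {1..n} - {i}" "card T = b - 1" "Om = insert i T" by auto
      have "finite T" using T(1) finite_subset by blast
      moreover have "i \<notin> T" using T(1) by auto
      ultimately have "card Om = b" using T assms by (simp add: card_insert_disjoint)
      then show "Om \<in> {Om \<in> bsubsets n b. i \<in> Om}" using T assms unfolding bsubsets_def by auto
    qed
    show "(\<lambda>Om. Om - {i}) ` {Om \<in> bsubsets n b. i \<in> Om} \<subseteq> {T. T \<subseteq> {1..n} - {i} \<and> card T = b - 1}"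
    proof
      fix T assume "T \<in> (\<lambda>Om. Om - {i}) ` {Om \<in> bsubsets n b. i \<in> Om}"
      then obtain Om where Om: "Om \<subseteq> {1..n}" "card Om = b" "i \<in> Om" "T = Om - {i}"
        unfolding bsubsets_def by auto
      have "finite Om" using Om(1) finite_subset by blast
      then show "T \<in> {T. T \<subseteq> {1..n} - {i} \<and> card T = b - 1}" using Om by auto
    qed
  qed
  have "card {T. T \<subseteq> {1..n} - {i} \<and> card T = b - 1} = card ({1..n} - {i}) choose (b - 1)"
    by (rule n_subsets) simp
  also have "card ({1..n} - {i}) = n - 1" using assms(3) by simp
  finally show ?thesis using bij_betw_same_card[OF bij] by simp
qed

lemma finite_bsubsets: "finite (bsubsets n b)"
  unfolding bsubsets_def by (rule finite_subset[of _ "Pow {1..n}"]) auto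

lemma card_bsubsets: "card (bsubsets n b) = n choose b"
  unfolding bsubsets_def using n_subsets[of "{1..n}" b] by simp

lemma bsub_sum:
  fixes v :: "nat \<Rightarrow> 'a::real_vector"
  assumes "1 \<le> b" "b \<le> n"
  shows "(\<Sum>Om\<in>bsubsets n b. \<Sum>i\<in>Om. v i) = real ((n - 1) choose (b - 1)) *\<^sub>R (\<Sum>i\<in>{1..n}. v i)"
proof -
  have "(\<Sum>Om\<in>bsubsets n b. \<Sum>i\<in>Om. v i) = (\<Sum>Om\<in>bsubsets n b. \<Sum>i\<in>{i\<in>{1..n}. i \<in> Om}. v i)"
    by (rule sum.cong) (auto simp: bsubsets_def intro!: sum.cong)
  also have "\<dots> = (\<Sum>i\<in>{1..n}. \<Sum>Om\<in>{Om\<in>bsubsets n b. i \<in> Om}. v i)"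
    by (rule sum.swap_restrict) (auto simp: finite_bsubsets)
  also have "\<dots> = (\<Sum>i\<in>{1..n}. real ((n - 1) choose (b - 1)) *\<^sub>R v i)"
      proof (rule sum.cong)
    fix i assume "i \<in> {1..n}"
    then show "(\<Sum>Om\<in>{Om\<in>bsubsets n b. i \<in> Om}. v i) = real ((n - 1) choose (b - 1)) *\<^sub>R v i"
      using card_containing[OF assms \<open>i \<in> {1..n}\<close>] by (simp only: sum_constant_scaleR)
  qed simp
  finally show ?thesis by (simp add: scaleR_sum_right)
qed

lemma bsub_mean:
  fixes v :: "nat \<Rightarrow> 'a::real_vector"
  assumes "1 \<le> b" "b \<le> n"
  shows "(\<Sum>Om\<in>bsubsets n b. (1 / real b) *\<^sub>R (\<Sum>i\<in>Om. v i)) = (real (card (bsubsets n b)) / real n) *\<^sub>R (\<Sum>i\<in>{1..n}. v i)"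
proof -
  obtain n' where n': "n = Suc n'" using assms by (cases n) auto
  have keyn: "n * ((n - 1) choose (b - 1)) = b * (n choose b)"
    using Suc_times_binomial_eq[of n' "b - 1"] assms n' by (simp add: mult.commute)
  have key: "real n * real ((n - 1) choose (b - 1)) = real b * real (n choose b)"
    using keyn by (metis of_nat_mult)
  have "(\<Sum>Om\<in>bsubsets n b. (1 / real b) *\<^sub>R (\<Sum>i\<in>Om. v i)) = (1 / real b) *\<^sub>R real ((n - 1) choose (b - 1)) *\<^sub>R (\<Sum>i\<in>{1..n}. v i)"
    by (simp only: scaleR_sum_right[symmetric] bsub_sum[OF assms] scaleR_scaleR)
  also have "(1 / real b) *\<^sub>R real ((n - 1) choose (b - 1)) *\<^sub>R (\<Sum>i\<in>{1..n}. v i) = (real (card (bsubsets n b)) / real n) *\<^sub>R (\<Sum>i\<in>{1..n}. v i)"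
  proof -
    have "(1 / real b) * real ((n - 1) choose (b - 1)) = real (n choose b) / real n"
      using key assms n' by (simp add: field_simps)
    then show ?thesis by (simp add: card_bsubsets)
  qed
  finally show ?thesis .
qed



lemma linear_repr:
  fixes L :: "real^'d \<Rightarrow> real"
  assumes "linear L"
  shows "L = (\<lambda>h. (\<Sum>b\<in>Basis. L b *\<^sub>R b) \<bullet> h)"
proof
  fix h :: "real^'d"
  have "L h = L (\<Sum>b\<in>Basis. (h \<bullet> b) *\<^sub>R b)" by (simp add: euclidean_representation)
  also have "\<dots> = (\<Sum>b\<in>Basis. (h \<bullet> b) * L b)"
    using assms by (simp add: linear_sum linear_scale)
  also have "\<dots> = (\<Sum>b\<in>Basis. L b *\<^sub>R b) \<bullet> h"
    by (simp add: inner_sum_left mult.commute inner_commute[of h])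
  finally show "L h = (\<Sum>b\<in>Basis. L b *\<^sub>R b) \<bullet> h" .
qed

lemma grad_works:
  fixes f :: "real^'d \<Rightarrow> 'x \<Rightarrow> real"
  assumes "(\<lambda>s. f s x) differentiable (at t)"
  shows "((\<lambda>s. f s x) has_derivative (\<lambda>h. grad f t x \<bullet> h)) (at t)"
proof -
  obtain L where L: "((\<lambda>s. f s x) has_derivative L) (at t)"
    using assms unfolding differentiable_def by blast
  have "linear L" using L by (rule has_derivative_linear)
  then have "\<exists>g. ((\<lambda>s. f s x) has_derivative (\<lambda>h. g \<bullet> h)) (at t)"
    using L linear_repr by metis
  then show ?thesis unfolding grad_def by (rule someI_ex)
qed

lemma grad_sum_zero:
  fixes f :: "real^'d \<Rightarrow> 'x \<Rightarrow> real"
  assumes d: "\<forall>i\<in>I. (\<lambda>s. f s (xs i)) differentiable (at t0)"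
    and mn: "\<forall>t. (\<Sum>i\<in>I. f t0 (xs i)) \<le> (\<Sum>i\<in>I. f t (xs i))"
  shows "(\<Sum>i\<in>I. grad f t0 (xs i)) = 0"
proof -
  have "((\<lambda>t. \<Sum>i\<in>I. f t (xs i)) has_derivative (\<lambda>h. \<Sum>i\<in>I. grad f t0 (xs i) \<bullet> h)) (at t0)"
    using d by (intro has_derivative_sum grad_works) auto
  then have "(\<lambda>h. \<Sum>i\<in>I. grad f t0 (xs i) \<bullet> h) = (\<lambda>h. 0)"
    by (rule has_derivative_local_min) (use mn in auto)
  then have "(\<Sum>i\<in>I. grad f t0 (xs i) \<bullet> (\<Sum>i\<in>I. grad f t0 (xs i))) = 0"
    by metis
  then have "(\<Sum>i\<in>I. grad f t0 (xs i)) \<bullet> (\<Sum>i\<in>I. grad f t0 (xs i)) = 0"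
    by (simp add: inner_sum_left)
  then show ?thesis by simp
qed


theorem lemmaD3:
  fixes f :: "real^'d \<Rightarrow> 'x::euclidean_space \<Rightarrow> real"
    and X :: "'x set" and D K1 K2 m K \<eta> :: real
    and p :: "real^'d \<Rightarrow> real"
    and xs :: "nat \<Rightarrow> 'x" and n b :: nat
    and theta_star :: "real^'d"
  assumes diff: "\<forall>x\<in>X. \<forall>t. (\<lambda>s. f s x) differentiable (at t)"
    and bounded: "\<forall>x\<in>X. norm x \<le> D"
    and K1: "K1 > 0" and K2: "K2 > 0"
    and A1: "\<forall>t1 t2 x1 x2. x1 \<in> X \<longrightarrow> x2 \<in> X \<longrightarrow>
          norm (grad f t1 x1 - grad f t2 x2)
            \<le> K1 * norm (t1 - t2) + K2 * norm (x1 - x2) * (norm t1 + norm t2 + 1)"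
    and m: "m > 0" and K: "K > 0"
    and A3: "\<forall>t1 t2 x. x \<in> X \<longrightarrow>
          (grad f t1 x - grad f t2 x) \<bullet> (t1 - t2) \<ge> m * (norm (t1 - t2))\<^sup>2 - K"
    and p_cont: "continuous_on UNIV p" and p_pos: "\<forall>z. p z > 0"
    and prob: "prob_space (density lborel p)"
    and mean0: "integrable (density lborel p) (\<lambda>z. z)"
               "(\<integral>z. z \<partial>(density lborel p)) = 0"
    and var_fin: "integrable (density lborel p) (\<lambda>z. (norm z)\<^sup>2)"
    and xs_in: "\<forall>i\<in>{1..n}. xs i \<in> X"
    and b: "1 \<le> b" "b \<le> n"
    and minimizer: "\<forall>t. (1 / real n) * (\<Sum>i=1..n. f theta_star (xs i))
                        \<le> (1 / real n) * (\<Sum>i=1..n. f t (xs i))"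
    and eta_pos: "\<eta> > 0"
    and eta: "\<eta> < min (1 / m) (m / (K1\<^sup>2 + 64 * D\<^sup>2 * K2\<^sup>2))"
  shows "\<forall>t. kernel_apply f xs n b \<eta> (density lborel p) (\<lambda>s. 1 + (norm (s - theta_star))\<^sup>2) t
     \<le> (1 - m * \<eta>) * (1 + (norm (t - theta_star))\<^sup>2) + 2 * m * \<eta> - \<eta>\<^sup>2 * K1\<^sup>2
       - 56 * \<eta>\<^sup>2 * D\<^sup>2 * K2\<^sup>2 + 64 * \<eta>\<^sup>2 * D\<^sup>2 * K2\<^sup>2 * (norm theta_star)\<^sup>2
       + 2 * \<eta> * K + \<eta>\<^sup>2 * (\<integral>z. (norm z)\<^sup>2 \<partial>(density lborel p))"
proof
  fix t :: "real^'d"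
  define S where "S = bsubsets n b"
  define N where "N = real (card S)"
  define g where "g i = grad f t (xs i)" for i
  define h where "h i = grad f theta_star (xs i)" for i
  define s where "s = t - theta_star"
  define r where "r = (norm s)\<^sup>2"
  define u where "u = norm theta_star"
  define a where "a = D\<^sup>2 * K2\<^sup>2"
  define sig where "sig = (\<integral>z. (norm z)\<^sup>2 \<partial>(density lborel p))"
  define Gb where "Gb = (1 / real n) *\<^sub>R (\<Sum>i\<in>{1..n}. g i)"
  define G where "G Om = (1 / real b) *\<^sub>R (\<Sum>i\<in>Om. g i)" for Om
  define A where "A Om = t - (\<eta> / real b) *\<^sub>R (\<Sum>i\<in>Om. g i) - theta_star" for Om
  define ct where "ct = 2 * D * K2 * (2 * norm t + 1)"
  define B where "B = s - \<eta> *\<^sub>R Gb"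
  have n1: "1 \<le> n" using b by simp
  have Sfin: "finite S" unfolding S_def by (rule finite_bsubsets)
  have Sne: "S \<noteq> {}"
  proof -
    have "{1..b} \<in> S" unfolding S_def bsubsets_def using b by auto
    then show ?thesis by auto
  qed
  have Npos: "N > 0" unfolding N_def using Sfin Sne by (simp add: card_gt_0_iff)
  have D0: "D \<ge> 0"
  proof -
    have "xs 1 \<in> X" using xs_in n1 by auto
    then show ?thesis using bounded norm_ge_zero order_trans by blast
  qed
  have hsum: "(\<Sum>i\<in>{1..n}. h i) = 0"
    unfolding h_def
  proof (rule grad_sum_zero)
    show "\<forall>i\<in>{1..n}. (\<lambda>s. f s (xs i)) differentiable (at theta_star)"
      using diff xs_in by auto
    show "\<forall>t. (\<Sum>i\<in>{1..n}. f theta_star (xs i)) \<le> (\<Sum>i\<in>{1..n}. f t (xs i))"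
    proof
      fix t'
      have "(1 / real n) * (\<Sum>i=1..n. f theta_star (xs i)) \<le> (1 / real n) * (\<Sum>i=1..n. f t' (xs i))"
        using minimizer by blast
      moreover have "(1 / real n) > 0" using n1 by simp
      ultimately show "(\<Sum>i\<in>{1..n}. f theta_star (xs i)) \<le> (\<Sum>i\<in>{1..n}. f t' (xs i))"
        by (simp add: divide_le_cancel)
    qed
  qed
  have Gb_alt: "Gb = (1 / real n) *\<^sub>R (\<Sum>i\<in>{1..n}. g i - h i)"
    unfolding Gb_def sum_subtractf hsum by simp
  have gh_norm: "norm (g i - h i) \<le> K1 * norm s" if "i \<in> {1..n}" for i
  proof -
    have "xs i \<in> X" using xs_in that by auto
    then show ?thesis using A1 unfolding g_def h_def s_def by fastforce
  qed
  have gh_inner: "(g i - h i) \<bullet> s \<ge> m * r - K" if "i \<in> {1..n}" for i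
  proof -
    have "xs i \<in> X" using xs_in that by auto
    then show ?thesis using A3 unfolding g_def h_def s_def r_def by blast
  qed
  have gg_norm: "norm (g i - g j) \<le> ct" if "i \<in> {1..n}" "j \<in> {1..n}" for i j
  proof -
    have X: "xs i \<in> X" "xs j \<in> X" using xs_in that by auto
    have "norm (g i - g j) \<le> K1 * norm (t - t) + K2 * norm (xs i - xs j) * (norm t + norm t + 1)"
      using A1 X unfolding g_def by blast
    also have "\<dots> = K2 * norm (xs i - xs j) * (2 * norm t + 1)" by simp
    also have "\<dots> \<le> K2 * (2 * D) * (2 * norm t + 1)"
    proof -
      have "norm (xs i - xs j) \<le> norm (xs i) + norm (xs j)" by (rule norm_triangle_ineq4)
      also have "\<dots> \<le> 2 * D"
      proof -
        have "norm (xs i) \<le> D" "norm (xs j) \<le> D" using bounded X by auto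
        then show ?thesis by linarith
      qed
      finally show ?thesis using K2 by (intro mult_right_mono mult_left_mono) auto
    qed
    finally show ?thesis unfolding ct_def by (simp add: algebra_simps)
  qed
  have ct0: "ct \<ge> 0" unfolding ct_def using D0 K2 by simp
  have Gb_norm: "norm Gb \<le> K1 * norm s"
  proof -
    have "norm Gb = (1 / real n) * norm (\<Sum>i\<in>{1..n}. g i - h i)"
      unfolding Gb_alt by simp
    also have "\<dots> \<le> (1 / real n) * (\<Sum>i\<in>{1..n}. norm (g i - h i))"
      by (intro mult_left_mono norm_sum) auto
    also have "\<dots> \<le> (1 / real n) * (\<Sum>i\<in>{1..n}. K1 * norm s)"
      by (intro mult_left_mono sum_mono gh_norm) auto
    also have "\<dots> = K1 * norm s" using n1 by simp
    finally show ?thesis .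
  qed
  have Gb_inner: "s \<bullet> Gb \<ge> m * r - K"
  proof -
    have "s \<bullet> Gb = (1 / real n) * (\<Sum>i\<in>{1..n}. (g i - h i) \<bullet> s)"
      unfolding Gb_alt by (simp add: inner_sum_right inner_commute)
    also have "\<dots> \<ge> (1 / real n) * (\<Sum>i\<in>{1..n}. m * r - K)"
      by (intro mult_left_mono sum_mono gh_inner) auto
    moreover have "(1 / real n) * (\<Sum>i\<in>{1..n}. m * r - K) = m * r - K" using n1 by simp
    ultimately show ?thesis by simp
  qed
  have gGb: "norm (g i - Gb) \<le> ct" if "i \<in> {1..n}" for i
  proof -
    have "(\<Sum>j\<in>{1..n}. g i - g j) = real n *\<^sub>R g i - (\<Sum>j\<in>{1..n}. g j)"
      by (simp only: sum_subtractf sum_constant_scaleR card_atLeastAtMost) simp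
    then have "g i - Gb = (1 / real n) *\<^sub>R (\<Sum>j\<in>{1..n}. g i - g j)"
      unfolding Gb_def using n1 by (simp add: scaleR_diff_right)
    then have "norm (g i - Gb) = (1 / real n) * norm (\<Sum>j\<in>{1..n}. g i - g j)" by simp
    also have "\<dots> \<le> (1 / real n) * (\<Sum>j\<in>{1..n}. norm (g i - g j))"
      by (intro mult_left_mono norm_sum) auto
    also have "\<dots> \<le> (1 / real n) * (\<Sum>j\<in>{1..n}. ct)"
      by (intro mult_left_mono sum_mono gg_norm that) auto
    also have "\<dots> = ct" using n1 by simp
    finally show ?thesis .
  qed
  have GOm: "norm (G Om - Gb) \<le> ct" if "Om \<in> S" for Om
  proof -
    have Om: "Om \<subseteq> {1..n}" "card Om = b" using that unfolding S_def bsubsets_def by auto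
    have b0: "real b > 0" using b by simp
    have "(\<Sum>i\<in>Om. g i - Gb) = real b *\<^sub>R Gb - real b *\<^sub>R Gb + ((\<Sum>i\<in>Om. g i) - real b *\<^sub>R Gb)"
      by (simp only: sum_subtractf sum_constant_scaleR Om(2)) simp
    then have "G Om - Gb = (1 / real b) *\<^sub>R (\<Sum>i\<in>Om. g i - Gb)"
      unfolding G_def using Om b0 by (simp add: scaleR_diff_right)
    then have "norm (G Om - Gb) = (1 / real b) * norm (\<Sum>i\<in>Om. g i - Gb)" by simp
    also have "\<dots> \<le> (1 / real b) * (\<Sum>i\<in>Om. norm (g i - Gb))"
      by (intro mult_left_mono norm_sum) auto
    also have "\<dots> \<le> (1 / real b) * (\<Sum>i\<in>Om. ct)"
      using Om by (intro mult_left_mono sum_mono gGb) auto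
    also have "\<dots> = ct" using Om b0 by simp
    finally show ?thesis .
  qed
  have Gsum: "(\<Sum>Om\<in>S. G Om) = N *\<^sub>R Gb"
    unfolding G_def Gb_def N_def S_def using bsub_mean[OF b, of g] by simp
  have AB: "A Om = B - \<eta> *\<^sub>R (G Om - Gb)" for Om
    unfolding A_def B_def G_def s_def using b by (simp add: algebra_simps)
  have Anorm: "(norm (A Om))\<^sup>2 = (norm B)\<^sup>2 - 2 * \<eta> * (B \<bullet> (G Om - Gb)) + \<eta>\<^sup>2 * (norm (G Om - Gb))\<^sup>2" for Om
    unfolding AB power2_norm_eq_inner
    by (simp add: inner_diff_left inner_diff_right inner_commute power2_eq_square algebra_simps)
  have cross0: "(\<Sum>Om\<in>S. B \<bullet> (G Om - Gb)) = 0"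
  proof -
    have "(\<Sum>Om\<in>S. B \<bullet> (G Om - Gb)) = B \<bullet> ((\<Sum>Om\<in>S. G Om) - N *\<^sub>R Gb)"
      unfolding N_def by (simp add: inner_sum_right inner_diff_right sum_subtractf)
    then show ?thesis using Gsum by simp
  qed
  have sumA: "(\<Sum>Om\<in>S. (norm (A Om))\<^sup>2) \<le> N * ((norm B)\<^sup>2 + \<eta>\<^sup>2 * ct\<^sup>2)"
  proof -
    have "(\<Sum>Om\<in>S. (norm (A Om))\<^sup>2) = (\<Sum>Om\<in>S. (norm B)\<^sup>2) - 2 * \<eta> * (\<Sum>Om\<in>S. B \<bullet> (G Om - Gb)) + (\<Sum>Om\<in>S. \<eta>\<^sup>2 * (norm (G Om - Gb))\<^sup>2)"
      unfolding Anorm by (simp add: sum.distrib sum_subtractf sum_distrib_left)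
    also have "\<dots> = N * (norm B)\<^sup>2 + (\<Sum>Om\<in>S. \<eta>\<^sup>2 * (norm (G Om - Gb))\<^sup>2)"
      unfolding cross0 N_def by simp
    also have "(\<Sum>Om\<in>S. \<eta>\<^sup>2 * (norm (G Om - Gb))\<^sup>2) \<le> (\<Sum>Om\<in>S. \<eta>\<^sup>2 * ct\<^sup>2)"
      using GOm by (intro sum_mono mult_left_mono power_mono) auto
    also have "(\<Sum>Om\<in>S. \<eta>\<^sup>2 * ct\<^sup>2) = N * (\<eta>\<^sup>2 * ct\<^sup>2)" unfolding N_def by simp
    finally show ?thesis by (simp add: algebra_simps)
  qed
  have Bnorm: "(norm B)\<^sup>2 \<le> r - 2 * \<eta> * (m * r - K) + \<eta>\<^sup>2 * K1\<^sup>2 * r"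
  proof -
    have "(norm B)\<^sup>2 = r - 2 * \<eta> * (s \<bullet> Gb) + \<eta>\<^sup>2 * (norm Gb)\<^sup>2"
      unfolding B_def r_def power2_norm_eq_inner
      by (simp add: inner_diff_left inner_diff_right inner_commute power2_eq_square algebra_simps)
    moreover have "(norm Gb)\<^sup>2 \<le> K1\<^sup>2 * r"
    proof -
      have "(norm Gb)\<^sup>2 \<le> (K1 * norm s)\<^sup>2" using Gb_norm by (intro power_mono) auto
      then show ?thesis unfolding r_def by (simp add: power_mult_distrib)
    qed
    moreover have "2 * \<eta> * (m * r - K) \<le> 2 * \<eta> * (s \<bullet> Gb)"
      using Gb_inner eta_pos by (intro mult_left_mono) auto
    moreover have "\<eta>\<^sup>2 * (norm Gb)\<^sup>2 \<le> \<eta>\<^sup>2 * (K1\<^sup>2 * r)"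
      using \<open>(norm Gb)\<^sup>2 \<le> K1\<^sup>2 * r\<close> by (intro mult_left_mono) auto
    ultimately have "(norm B)\<^sup>2 \<le> r - 2 * \<eta> * (m * r - K) + \<eta>\<^sup>2 * (K1\<^sup>2 * r)"
      by linarith
    then show ?thesis by (simp add: mult.assoc)
  qed
  have ctb: "ct\<^sup>2 \<le> 64 * a * r + 64 * a * u\<^sup>2 + 8 * a"
  proof -
    have tn: "norm t \<le> norm s + u" unfolding s_def u_def using norm_triangle_ineq[of "t - theta_star" theta_star] by simp
    have "(2 * norm t + 1)\<^sup>2 \<le> 16 * r + 16 * u\<^sup>2 + 2"
    proof -
      have "(2 * norm t + 1)\<^sup>2 \<le> 8 * (norm t)\<^sup>2 + 2"
      proof -
        have "0 \<le> (2 * norm t - 1)\<^sup>2" by simp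
        moreover have "(2 * norm t - 1)\<^sup>2 = 4 * (norm t)\<^sup>2 - 4 * norm t + 1"
          by (simp add: power2_eq_square algebra_simps)
        moreover have "(2 * norm t + 1)\<^sup>2 = 4 * (norm t)\<^sup>2 + 4 * norm t + 1"
          by (simp add: power2_eq_square algebra_simps)
        ultimately show ?thesis by linarith
      qed
      also have "(norm t)\<^sup>2 \<le> (norm s + u)\<^sup>2" using tn by (intro power_mono) auto
      also have "(norm s + u)\<^sup>2 \<le> 2 * r + 2 * u\<^sup>2"
      proof -
        have "0 \<le> (norm s - u)\<^sup>2" by simp
        moreover have "(norm s - u)\<^sup>2 = (norm s)\<^sup>2 - 2 * norm s * u + u\<^sup>2"
          by (simp add: power2_eq_square algebra_simps)
        moreover have "(norm s + u)\<^sup>2 = (norm s)\<^sup>2 + 2 * norm s * u + u\<^sup>2"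
          by (simp add: power2_eq_square algebra_simps)
        ultimately show ?thesis unfolding r_def by linarith
      qed
      finally show ?thesis by simp
    qed
    moreover have "ct\<^sup>2 = 4 * a * (2 * norm t + 1)\<^sup>2" unfolding ct_def a_def by (simp add: power_mult_distrib)
    moreover have "a \<ge> 0" unfolding a_def by simp
    ultimately have "ct\<^sup>2 \<le> 4 * a * (16 * r + 16 * u\<^sup>2 + 2)"
      by (metis mult_left_mono mult_nonneg_nonneg zero_le_numeral)
    then show ?thesis by (simp add: algebra_simps)
  qed
  have kern: "kernel_apply f xs n b \<eta> (density lborel p) (\<lambda>s. 1 + (norm (s - theta_star))\<^sup>2) t
      = (\<Sum>Om\<in>S. 1 + (norm (A Om))\<^sup>2 + \<eta>\<^sup>2 * sig) / card S"
  proof -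
    have "kernel_apply f xs n b \<eta> (density lborel p) (\<lambda>s. 1 + (norm (s - theta_star))\<^sup>2) t
       = (\<integral>w. 1 + (norm (A (fst w) + \<eta> *\<^sub>R snd w))\<^sup>2 \<partial>(measure_pmf (pmf_of_set S) \<Otimes>\<^sub>M density lborel p))"
      unfolding kernel_apply_def sgld_step_def A_def g_def S_def
      by (rule Bochner_Integration.integral_cong) (auto simp: algebra_simps)
    also have "\<dots> = (\<Sum>Om\<in>S. 1 + (norm (A Om))\<^sup>2 + \<eta>\<^sup>2 * sig) / card S"
      unfolding sig_def
      by (rule kernel_eq[OF prob _ mean0 var_fin Sfin Sne]) simp
    finally show ?thesis .
  qed
  have "(\<Sum>Om\<in>S. 1 + (norm (A Om))\<^sup>2 + \<eta>\<^sup>2 * sig) = N * (1 + \<eta>\<^sup>2 * sig) + (\<Sum>Om\<in>S. (norm (A Om))\<^sup>2)"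
    unfolding N_def by (simp add: sum.distrib algebra_simps)
  then have kern2: "kernel_apply f xs n b \<eta> (density lborel p) (\<lambda>s. 1 + (norm (s - theta_star))\<^sup>2) t
      = 1 + \<eta>\<^sup>2 * sig + (\<Sum>Om\<in>S. (norm (A Om))\<^sup>2) / N"
    using kern Npos unfolding N_def by (simp add: field_simps)
  have avgA: "(\<Sum>Om\<in>S. (norm (A Om))\<^sup>2) / N \<le> (norm B)\<^sup>2 + \<eta>\<^sup>2 * ct\<^sup>2"
    using sumA Npos by (simp add: divide_le_eq mult.commute)
  have etac: "\<eta> * (K1\<^sup>2 + 64 * a) \<le> m"
  proof -
    have pos: "K1\<^sup>2 + 64 * a > 0" unfolding a_def using K1 by (simp add: add_pos_nonneg)
    have "\<eta> < m / (K1\<^sup>2 + 64 * a)" using eta unfolding a_def by (simp add: mult.assoc)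
    then show ?thesis using pos by (simp add: less_divide_eq)
  qed
  have r0: "r \<ge> 0" unfolding r_def by simp
  have fin: "1 + \<eta>\<^sup>2 * sig + ((r - 2 * \<eta> * (m * r - K) + \<eta>\<^sup>2 * K1\<^sup>2 * r) + \<eta>\<^sup>2 * (64 * a * r + 64 * a * u\<^sup>2 + 8 * a))
     \<le> (1 - m * \<eta>) * (1 + r) + 2 * m * \<eta> - \<eta>\<^sup>2 * K1\<^sup>2
       - 56 * \<eta>\<^sup>2 * a + 64 * \<eta>\<^sup>2 * a * u\<^sup>2 + 2 * \<eta> * K + \<eta>\<^sup>2 * sig"
  proof -
    have "\<eta> * (\<eta> * (K1\<^sup>2 + 64 * a)) \<le> \<eta> * m"
      using etac eta_pos by (intro mult_left_mono) auto
    then have "0 \<le> m * \<eta> - \<eta> * \<eta> * (K1\<^sup>2 + 64 * a)" by (simp add: algebra_simps)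
    then have "0 \<le> (m * \<eta> - \<eta> * \<eta> * (K1\<^sup>2 + 64 * a)) * (r + 1)"
      using r0 by (intro mult_nonneg_nonneg) auto
    then show ?thesis by (simp add: power2_eq_square algebra_simps)
  qed
  have "kernel_apply f xs n b \<eta> (density lborel p) (\<lambda>s. 1 + (norm (s - theta_star))\<^sup>2) t
     \<le> 1 + \<eta>\<^sup>2 * sig + ((r - 2 * \<eta> * (m * r - K) + \<eta>\<^sup>2 * K1\<^sup>2 * r) + \<eta>\<^sup>2 * (64 * a * r + 64 * a * u\<^sup>2 + 8 * a))"
  proof -
    have "\<eta>\<^sup>2 * ct\<^sup>2 \<le> \<eta>\<^sup>2 * (64 * a * r + 64 * a * u\<^sup>2 + 8 * a)"
      using ctb by (intro mult_left_mono) auto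
    then show ?thesis unfolding kern2 using avgA Bnorm by linarith
  qed
  also note fin
  finally show "kernel_apply f xs n b \<eta> (density lborel p) (\<lambda>s. 1 + (norm (s - theta_star))\<^sup>2) t
     \<le> (1 - m * \<eta>) * (1 + (norm (t - theta_star))\<^sup>2) + 2 * m * \<eta> - \<eta>\<^sup>2 * K1\<^sup>2
       - 56 * \<eta>\<^sup>2 * D\<^sup>2 * K2\<^sup>2 + 64 * \<eta>\<^sup>2 * D\<^sup>2 * K2\<^sup>2 * (norm theta_star)\<^sup>2
       + 2 * \<eta> * K + \<eta>\<^sup>2 * (\<integral>z. (norm z)\<^sup>2 \<partial>(density lborel p))"
    unfolding r_def s_def a_def u_def sig_def by (simp add: algebra_simps)
qed

end
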